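(* Let $r\ge2$ be an integer. There exists $\alpha_0>0$ such that for every $\alpha\in(0,\alpha_0]$ there exists $\varepsilon_0>0$ such that for every $\varepsilon\in(0,\varepsilon_0]$ there exists $n_0$ such that for all $n\ge n_0$ the following holds. Suppose that $G$ is an $n$-vertex graph that contains at most $\varepsilon n^r$ copies of $K_r$ and $\sigma(G)\ge 2\left(1-\frac{1}{r-1}-\alpha\right)n$. Then $G$ admits a $\sqrt{\alpha}$-independent set of size at least $\frac{n}{r-1}$.
   Context: All graphs are finite and simple. $\sigma(G):=\min\{d(x)+d(y): x\ne y,\ xy\notin E(G)\}$ ($+\infty$ if $G$ is complete). For an $n$-vertex graph $G$ and $\gamma>0$, a set $S\subseteq V(G)$ is $\gamma$-independent if $G[S]$ has at most $\gamma n^2$ edges. *)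

theory Defs
  imports Complex_Main "HOL-Library.Extended_Real"
begin

definition simple_graph :: "'a set \<Rightarrow> ('a \<Rightarrow> 'a \<Rightarrow> bool) \<Rightarrow> bool" where
  "simple_graph V E \<longleftrightarrow> finite V \<and>
     (\<forall>x y. E x y \<longrightarrow> x \<in> V \<and> y \<in> V \<and> x \<noteq> y) \<and>
     (\<forall>x y. E x y \<longrightarrow> E y x)"

definition degree :: "'a set \<Rightarrow> ('a \<Rightarrow> 'a \<Rightarrow> bool) \<Rightarrow> 'a \<Rightarrow> nat" where
  "degree V E x = card {y \<in> V. E x y}"

text \<open>sigma(G) = min of d(x)+d(y) over distinct non-adjacent pairs; +infinity if none.\<close>
definition sigma :: "'a set \<Rightarrow> ('a \<Rightarrow> 'a \<Rightarrow> bool) \<Rightarrow> ereal" where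
  "sigma V E = (INF p \<in> {(x, y). x \<in> V \<and> y \<in> V \<and> x \<noteq> y \<and> \<not> E x y}.
                  ereal (real (degree V E (fst p) + degree V E (snd p))))"

definition num_cliques :: "'a set \<Rightarrow> ('a \<Rightarrow> 'a \<Rightarrow> bool) \<Rightarrow> nat \<Rightarrow> nat" where
  "num_cliques V E r = card {S. S \<subseteq> V \<and> card S = r \<and> (\<forall>x\<in>S. \<forall>y\<in>S. x \<noteq> y \<longrightarrow> E x y)}"

definition edges_in :: "('a \<Rightarrow> 'a \<Rightarrow> bool) \<Rightarrow> 'a set \<Rightarrow> nat" where
  "edges_in E S = card {{x, y} | x y. x \<in> S \<and> y \<in> S \<and> E x y}"

definition gamma_independent :: "'a set \<Rightarrow> ('a \<Rightarrow> 'a \<Rightarrow> bool) \<Rightarrow> real \<Rightarrow> 'a set \<Rightarrow> bool" where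
  "gamma_independent V E \<gamma> S \<longleftrightarrow> S \<subseteq> V \<and> real (edges_in E S) \<le> \<gamma> * (real (card V))^2"

end

theory Submission
  imports Defs
begin

definition nb :: "'a set \<Rightarrow> ('a \<Rightarrow> 'a \<Rightarrow> bool) \<Rightarrow> 'a \<Rightarrow> 'a set" where
  "nb V E v = {y\<in>V. E v y}"
definition cnb :: "'a set \<Rightarrow> ('a \<Rightarrow> 'a \<Rightarrow> bool) \<Rightarrow> 'a list \<Rightarrow> 'a set" where
  "cnb V E Q = {y\<in>V. \<forall>v\<in>set Q. E v y}"
definition ES :: "('a \<Rightarrow> 'a \<Rightarrow> bool) \<Rightarrow> 'a set \<Rightarrow> 'a set set" where
  "ES E X = {{x, y} | x y. x \<in> X \<and> y \<in> X \<and> E x y}"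
definition OC :: "('a \<Rightarrow> 'a \<Rightarrow> bool) \<Rightarrow> 'a set \<Rightarrow> nat \<Rightarrow> 'a list set" where
  "OC E H k = {Q. length Q = k \<and> distinct Q \<and> set Q \<subseteq> H \<and> (\<forall>x\<in>set Q. \<forall>y\<in>set Q. x \<noteq> y \<longrightarrow> E x y)}"

lemma edges_in_ES: "edges_in E X = card (ES E X)"
  by (simp add: edges_in_def ES_def)

lemma ES_sub: "simple_graph V E \<Longrightarrow> ES E X \<subseteq> Pow V"
  by (auto simp: ES_def simple_graph_def)

lemma ES_finite: "simple_graph V E \<Longrightarrow> finite (ES E X)"
  by (meson ES_sub finite_Pow_iff rev_finite_subset simple_graph_def)

lemma sigma_le:
  assumes "x \<in> V" "y \<in> V" "x \<noteq> y" "\<not> E x y"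
  shows "sigma V E \<le> ereal (real (degree V E x + degree V E y))"
  unfolding sigma_def
proof -
  have "(x,y) \<in> {(x, y). x \<in> V \<and> y \<in> V \<and> x \<noteq> y \<and> \<not> E x y}" using assms by auto
  then show "(INF p \<in> {(x, y). x \<in> V \<and> y \<in> V \<and> x \<noteq> y \<and> \<not> E x y}.
                  ereal (real (degree V E (fst p) + degree V E (snd p)))) \<le> ereal (real (degree V E x + degree V E y))"
    by (metis (no_types, lifting) INF_lower fst_conv snd_conv)
qed

lemma card_compl_nb:
  assumes "simple_graph V E"
  shows "card (V - nb V E v) = card V - degree V E v"
proof -
  have "finite V" using assms by (simp add: simple_graph_def)
  moreover have "nb V E v \<subseteq> V" by (auto simp: nb_def)
  ultimately show ?thesis by (simp add: card_Diff_subset degree_def nb_def finite_subset)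
qed

lemma degree_le: "simple_graph V E \<Longrightarrow> degree V E v \<le> card V"
  unfolding degree_def simple_graph_def by (auto intro: card_mono)

lemma cnb_card:
  assumes "simple_graph V E"
  shows "real (card (cnb V E Q)) \<ge> real (card V) - (\<Sum>v\<in>set Q. (real (card V) - real (degree V E v)))"
proof -
  have fin: "finite V" using assms by (simp add: simple_graph_def)
  have sub: "cnb V E Q \<subseteq> V" by (auto simp: cnb_def)
  have eq: "V - cnb V E Q = (\<Union>v\<in>set Q. V - nb V E v)" by (auto simp: cnb_def nb_def)
  have "card (V - cnb V E Q) \<le> (\<Sum>v\<in>set Q. card (V - nb V E v))"
    unfolding eq by (rule card_UN_le) simp
  also have "\<dots> = (\<Sum>v\<in>set Q. card V - degree V E v)"
    using card_compl_nb[OF assms] by simp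
  finally have "real (card (V - cnb V E Q)) \<le> real (\<Sum>v\<in>set Q. card V - degree V E v)" by linarith
  also have "\<dots> = (\<Sum>v\<in>set Q. (real (card V) - real (degree V E v)))"
    using degree_le[OF assms] by (simp add: of_nat_diff)
  finally show ?thesis
    using card_Diff_subset[OF finite_subset[OF sub fin] sub] card_mono[OF fin sub] by (simp add: of_nat_diff)
qed

lemma edges_extend:
  assumes "simple_graph V E" "A \<subseteq> V"
  shows "edges_in E (X \<union> A) \<le> edges_in E X + card A * card V"
proof -
  have fin: "finite V" using assms by (simp add: simple_graph_def)
  have "ES E (X \<union> A) \<subseteq> ES E X \<union> (\<lambda>(a,y). {a,y}) ` (A \<times> V)"
    using assms(1) unfolding ES_def simple_graph_def by (auto simp: insert_commute)
  hence "card (ES E (X \<union> A)) \<le> card (ES E X \<union> (\<lambda>(a,y). {a,y}) ` (A \<times> V))"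
    by (intro card_mono) (use ES_finite[OF assms(1)] fin assms(2) in \<open>auto intro: finite_subset\<close>)
  also have "\<dots> \<le> card (ES E X) + card ((\<lambda>(a,y). {a,y}) ` (A \<times> V))" by (rule card_Un_le)
  also have "card ((\<lambda>(a,y). {a,y}) ` (A \<times> V)) \<le> card (A \<times> V)" by (rule card_image_le) (use fin assms(2) finite_subset in auto)
  finally show ?thesis by (simp add: edges_in_ES card_cartesian_product)
qed

lemma count_upper:
  assumes G: "simple_graph V E" and HV: "H \<subseteq> V"
  shows "card (SIGMA Q:OC E H m. ES E (cnb V E Q)) \<le> (m+2)^m * 2^(m+2) * num_cliques V E (m+2)"
proof -
  have fin: "finite V" using G by (simp add: simple_graph_def)
  define Cl where "Cl = {S. S \<subseteq> V \<and> card S = m+2 \<and> (\<forall>x\<in>S. \<forall>y\<in>S. x \<noteq> y \<longrightarrow> E x y)}"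
  have finCl: "finite Cl" unfolding Cl_def by (rule finite_subset[of _ "Pow V"]) (use fin in auto)
  define F where "F = (\<lambda>S::'a set. {Q. set Q \<subseteq> S \<and> length Q = m} \<times> Pow S)"
  have sub: "(SIGMA Q:OC E H m. ES E (cnb V E Q)) \<subseteq> (\<Union>S\<in>Cl. F S)"
  proof
    fix p assume "p \<in> (SIGMA Q:OC E H m. ES E (cnb V E Q))"
    then obtain Q e where p: "p = (Q, e)" and Q: "Q \<in> OC E H m" and e: "e \<in> ES E (cnb V E Q)" by auto
    from e obtain x y where exy: "e = {x,y}" "x \<in> cnb V E Q" "y \<in> cnb V E Q" "E x y"
      unfolding ES_def by auto
    have irr: "\<And>z. \<not> E z z" using G by (auto simp: simple_graph_def)
    have sym: "\<And>a b. E a b \<Longrightarrow> E b a" using G by (auto simp: simple_graph_def)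
    have xV: "x \<in> V" "y \<in> V" and xQ: "\<forall>v\<in>set Q. E v x" "\<forall>v\<in>set Q. E v y"
      using exy(2,3) by (auto simp: cnb_def)
    have xn: "x \<notin> set Q" "y \<notin> set Q" using xQ irr by auto
    have xy: "x \<noteq> y" using exy(4) irr by auto
    have Qp: "length Q = m" "distinct Q" "set Q \<subseteq> H" "\<forall>a\<in>set Q. \<forall>b\<in>set Q. a \<noteq> b \<longrightarrow> E a b"
      using Q by (auto simp: OC_def)
    define S where "S = set Q \<union> e"
    have "card S = m + 2"
      using xn xy Qp(1,2) by (simp add: S_def exy(1) distinct_card)
    moreover have "S \<subseteq> V" using Qp(3) HV xV by (auto simp: S_def exy(1))
    moreover have "\<forall>a\<in>S. \<forall>b\<in>S. a \<noteq> b \<longrightarrow> E a b"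
    proof (intro ballI impI)
      fix a b assume ab: "a \<in> S" "b \<in> S" "a \<noteq> b"
      have xQ': "\<forall>v\<in>set Q. E x v" "\<forall>v\<in>set Q. E v x" "\<forall>v\<in>set Q. E y v" "\<forall>v\<in>set Q. E v y"
        using xQ sym by blast+
      have "E y x" using sym exy(4) by blast
      then show "E a b" using ab Qp(4) xQ' exy(4) unfolding S_def exy(1) by auto
    qed
    ultimately have "S \<in> Cl" by (simp add: Cl_def)
    moreover have "p \<in> F S" by (auto simp: p F_def S_def Qp(1))
    ultimately show "p \<in> (\<Union>S\<in>Cl. F S)" by blast
  qed
  have finF: "\<And>S. S \<in> Cl \<Longrightarrow> finite S" unfolding Cl_def using fin by (auto intro: finite_subset)
  have "card (SIGMA Q:OC E H m. ES E (cnb V E Q)) \<le> card (\<Union>S\<in>Cl. F S)"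
  proof (rule card_mono[OF _ sub])
    have "finite (F S)" if "S \<in> Cl" for S
      using finF[OF that] unfolding F_def by (intro finite_cartesian_product finite_lists_length_eq) simp_all
    then show "finite (\<Union>S\<in>Cl. F S)" using finCl by blast
  qed
  also have "\<dots> \<le> (\<Sum>S\<in>Cl. card (F S))" by (rule card_UN_le[OF finCl])
  also have "\<dots> = (\<Sum>S\<in>Cl. (m+2)^m * 2^(m+2))"
  proof (rule sum.cong)
    fix S assume "S \<in> Cl"
    then have "finite S" "card S = m+2" using finF[of S] unfolding Cl_def by blast+
    then show "card (F S) = (m+2)^m * 2^(m+2)"
      by (simp add: F_def card_cartesian_product card_lists_length_eq card_Pow)
  qed simp
  also have "\<dots> = (m+2)^m * 2^(m+2) * num_cliques V E (m+2)"
  proof -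
    have "num_cliques V E (m+2) = card Cl" unfolding num_cliques_def Cl_def by (rule refl)
    then show ?thesis by simp
  qed
  finally show ?thesis .
qed

lemma OC_lower:
  assumes G: "simple_graph V E" and HV: "H \<subseteq> V" and c: "c \<ge> 0"
    and step: "\<And>k Q. k < m \<Longrightarrow> Q \<in> OC E H k \<Longrightarrow> real (card (H \<inter> cnb V E Q)) \<ge> c"
  shows "k \<le> m \<Longrightarrow> real (card (OC E H k)) \<ge> c ^ k"
proof (induction k)
  case 0
  have "OC E H 0 = {[]}" by (auto simp: OC_def)
  then show ?case by simp
next
  case (Suc k)
  have fin: "finite V" using G by (simp add: simple_graph_def)
  have finOC: "finite (OC E H j)" for j
  proof (rule finite_subset)
    show "OC E H j \<subseteq> {xs. set xs \<subseteq> V \<and> length xs = j}" using HV by (auto simp: OC_def)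
  qed (rule finite_lists_length_eq[OF fin])
  have irr: "\<And>z. \<not> E z z" using G by (auto simp: simple_graph_def)
  have sym: "\<And>a b. E a b \<Longrightarrow> E b a" using G by (auto simp: simple_graph_def)
  let ?S = "SIGMA Q:OC E H k. H \<inter> cnb V E Q"
  have img: "(\<lambda>(Q,v). v # Q) ` ?S \<subseteq> OC E H (Suc k)"
  proof
    fix z assume "z \<in> (\<lambda>(Q,v). v # Q) ` ?S"
    then obtain Q v where z: "z = v # Q" and Q: "Q \<in> OC E H k" and v: "v \<in> H" "v \<in> cnb V E Q" by auto
    have vQ: "\<forall>u\<in>set Q. E u v" using v by (auto simp: cnb_def)
    hence "v \<notin> set Q" using irr by auto
    then show "z \<in> OC E H (Suc k)" using Q v vQ sym by (auto simp: OC_def z)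
  qed
  have inj: "inj_on (\<lambda>(Q,v). v # Q) ?S" by (auto simp: inj_on_def)
  have "(\<Sum>Q\<in>OC E H k. c) \<le> (\<Sum>Q\<in>OC E H k. real (card (H \<inter> cnb V E Q)))"
    using step[of k] Suc.prems by (intro sum_mono) auto
  also have "\<dots> = real (card ?S)"
    using finOC fin by (simp add: card_SigmaI cnb_def)
  also have "\<dots> = real (card ((\<lambda>(Q,v). v # Q) ` ?S))" by (simp add: card_image[OF inj])
  also have "\<dots> \<le> real (card (OC E H (Suc k)))" using card_mono[OF finOC img] by simp
  finally have "real (card (OC E H k)) * c \<le> real (card (OC E H (Suc k)))" by simp
  moreover have "c ^ k \<le> real (card (OC E H k))" using Suc by simp
  ultimately have "c ^ k * c \<le> real (card (OC E H k)) * c" using c by (intro mult_right_mono)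
  with \<open>real (card (OC E H k)) * c \<le> real (card (OC E H (Suc k)))\<close> show ?case
    by (simp add: mult.commute)
qed

lemma clique_lower:
  assumes G: "simple_graph V E" and LV: "L \<subseteq> V"
    and cl: "\<forall>x\<in>L. \<forall>y\<in>L. x \<noteq> y \<longrightarrow> E x y" and r: "r \<le> card L" "r > 0"
  shows "(real (card L) / real r) ^ r \<le> real (num_cliques V E r)"
proof -
  have fin: "finite V" using G by (simp add: simple_graph_def)
  have "{B. B \<subseteq> L \<and> card B = r} \<subseteq> {S. S \<subseteq> V \<and> card S = r \<and> (\<forall>x\<in>S. \<forall>y\<in>S. x \<noteq> y \<longrightarrow> E x y)}"
    using LV cl by auto
  hence "card {B. B \<subseteq> L \<and> card B = r} \<le> num_cliques V E r"
    unfolding num_cliques_def by (rule card_mono[rotated]) (rule finite_subset[of _ "Pow V"], use fin in auto)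
  moreover have "card {B. B \<subseteq> L \<and> card B = r} = card L choose r"
    by (rule n_subsets) (use fin LV finite_subset in blast)
  moreover have "(real (card L) / real r) ^ r \<le> real (card L choose r)"
    by (rule binomial_ge_n_over_k_pow_k[OF r(1)])
  ultimately have "real (card L choose r) \<le> real (num_cliques V E r)" "(real (card L) / real r) ^ r \<le> real (card L choose r)"
    by simp_all
  then show ?thesis by linarith
qed


theorem proposition2p3:
  fixes r :: nat
  assumes "r \<ge> 2"
  shows "\<exists>\<alpha>0>0. \<forall>\<alpha>::real. 0 < \<alpha> \<and> \<alpha> \<le> \<alpha>0 \<longrightarrow>
          (\<exists>\<epsilon>0>0. \<forall>\<epsilon>::real. 0 < \<epsilon> \<and> \<epsilon> \<le> \<epsilon>0 \<longrightarrow>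
            (\<exists>n0::nat. \<forall>n\<ge>n0. \<forall>(V::nat set) (E::nat \<Rightarrow> nat \<Rightarrow> bool).
               simple_graph V E \<and> card V = n \<and>
               real (num_cliques V E r) \<le> \<epsilon> * real n ^ r \<and>
               sigma V E \<ge> ereal (2 * (1 - 1 / (real r - 1) - \<alpha>) * real n) \<longrightarrow>
               (\<exists>S. gamma_independent V E (sqrt \<alpha>) S \<and> real (card S) \<ge> real n / (real r - 1))))"
proof -
  obtain m where rm: "r = m + 2" using le_Suc_ex[OF assms] by auto
  define \<beta> where "\<beta> = 1 / (real r - 1)"
  have rr: "real r - 1 = real m + 1" using rm by simp
  have b1: "(real m + 1) * \<beta> = 1" unfolding \<beta>_def rr by simp
  have b0: "\<beta> > 0" unfolding \<beta>_def rr by simp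
  have ble: "\<beta> \<le> 1" unfolding \<beta>_def rr by simp
  define \<alpha>0 where "\<alpha>0 = min (\<beta> / real r) (1 / (16 * (real m + 1)^2))"
  have a0: "\<alpha>0 > 0" unfolding \<alpha>0_def using b0 rm by simp
  show ?thesis
  proof (rule exI[of _ \<alpha>0], intro conjI allI impI)
    show "\<alpha>0 > 0" by (rule a0)
    fix \<alpha> :: real assume "0 < \<alpha> \<and> \<alpha> \<le> \<alpha>0"
    hence a: "0 < \<alpha>" "\<alpha> \<le> \<alpha>0" by auto
    have ab: "real r * \<alpha> \<le> \<beta>" using a(2) rm unfolding \<alpha>0_def by (simp add: field_simps)
    define s where "s = sqrt \<alpha>"
    have s0: "s > 0" using a by (simp add: s_def)
    have ss: "s * s = \<alpha>" using a by (simp add: s_def)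
    have "s\<^sup>2 \<le> (1 / (4 * (real m + 1)))\<^sup>2"
    proof -
      have "(1 / (4 * (real m + 1)))\<^sup>2 = 1 / (16 * (real m + 1)^2)" proof -
        have "(4 * (real m + 1))\<^sup>2 = 16 * (real m + 1)^2" by (simp only: power_mult_distrib) simp
        thus ?thesis by (simp only: power_divide power_one)
      qed
      moreover have "\<alpha> \<le> 1 / (16 * (real m + 1)^2)" using a(2) unfolding \<alpha>0_def by simp
      ultimately show ?thesis using ss by (simp add: power2_eq_square)
    qed
    hence "s \<le> 1 / (4 * (real m + 1))" by (rule power2_le_imp_le) simp
    hence s1: "4 * (real m + 1) * s \<le> 1" by (simp add: field_simps)
    define \<gamma> where "\<gamma> = s / 2"
    define \<delta> where "\<delta> = \<beta> / 2"
    define K :: nat where "K = (m+2)^m * 2^(m+2)"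
    have K0: "K > 0" unfolding K_def by simp
    define \<epsilon>0 where "\<epsilon>0 = min ((\<delta> / real r)^r / 2) (\<delta>^m * \<gamma> / (2 * real K))"
    have e0: "\<epsilon>0 > 0" unfolding \<epsilon>0_def \<delta>_def \<gamma>_def using b0 s0 K0 rm by simp
    show "\<exists>\<epsilon>0>0. \<forall>\<epsilon>::real. 0 < \<epsilon> \<and> \<epsilon> \<le> \<epsilon>0 \<longrightarrow>
            (\<exists>n0::nat. \<forall>n\<ge>n0. \<forall>(V::nat set) (E::nat \<Rightarrow> nat \<Rightarrow> bool).
               simple_graph V E \<and> card V = n \<and>
               real (num_cliques V E r) \<le> \<epsilon> * real n ^ r \<and>
               sigma V E \<ge> ereal (2 * (1 - 1 / (real r - 1) - \<alpha>) * real n) \<longrightarrow>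
               (\<exists>S. gamma_independent V E (sqrt \<alpha>) S \<and> real (card S) \<ge> real n / (real r - 1)))"
    proof (rule exI[of _ \<epsilon>0], intro conjI allI impI)
      show "\<epsilon>0 > 0" by (rule e0)
      fix \<epsilon> :: real assume "0 < \<epsilon> \<and> \<epsilon> \<le> \<epsilon>0"
      hence e: "0 < \<epsilon>" "\<epsilon> \<le> \<epsilon>0" by auto
      define n0 :: nat where "n0 = nat \<lceil>2 * real r / \<beta> + 4 / s\<rceil> + 1"
      show "\<exists>n0::nat. \<forall>n\<ge>n0. \<forall>(V::nat set) (E::nat \<Rightarrow> nat \<Rightarrow> bool).
               simple_graph V E \<and> card V = n \<and>
               real (num_cliques V E r) \<le> \<epsilon> * real n ^ r \<and>
               sigma V E \<ge> ereal (2 * (1 - 1 / (real r - 1) - \<alpha>) * real n) \<longrightarrow>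
               (\<exists>S. gamma_independent V E (sqrt \<alpha>) S \<and> real (card S) \<ge> real n / (real r - 1))"
      proof (rule exI[of _ n0], intro allI impI)
        fix n :: nat and V :: "nat set" and E :: "nat \<Rightarrow> nat \<Rightarrow> bool"
        assume nn0: "n0 \<le> n"
        assume "simple_graph V E \<and> card V = n \<and>
               real (num_cliques V E r) \<le> \<epsilon> * real n ^ r \<and>
               sigma V E \<ge> ereal (2 * (1 - 1 / (real r - 1) - \<alpha>) * real n)"
        hence G: "simple_graph V E" and cV: "card V = n"
          and ncl: "real (num_cliques V E r) \<le> \<epsilon> * real n ^ r"
          and sig: "sigma V E \<ge> ereal (2 * (1 - \<beta> - \<alpha>) * real n)"
          unfolding \<beta>_def by auto
        have finV: "finite V" using G by (simp add: simple_graph_def)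
        have nbig: "real n \<ge> 2 * real r / \<beta> + 4 / s" using nn0 unfolding n0_def by linarith
        have p1: "2 * real r / \<beta> > 0" using b0 rm by simp
        have p2: "4 / s > 0" using s0 by simp
        have npos: "real n > 0" using nbig p1 p2 by linarith
        have "real n \<ge> 2 * real r / \<beta>" using nbig p2 by linarith
        hence nr: "\<delta> * real n \<ge> real r" using b0 unfolding \<delta>_def by (simp add: field_simps)
        have "real n \<ge> 4 / s" using nbig p1 by linarith
        hence ns: "1 / real n \<le> s / 4" using s0 npos by (simp add: field_simps)
        define d where "d v = degree V E v" for v
        define H where "H = {v\<in>V. real (d v) \<ge> (1 - \<beta> - \<alpha>) * real n}"
        define L where "L = V - H"
        have HV: "H \<subseteq> V" and LV: "L \<subseteq> V" by (auto simp: H_def L_def)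
        have Lcl: "\<forall>x\<in>L. \<forall>y\<in>L. x \<noteq> y \<longrightarrow> E x y"
        proof (intro ballI impI, rule ccontr)
          fix x y assume xy: "x \<in> L" "y \<in> L" "x \<noteq> y" "\<not> E x y"
          have "sigma V E \<le> ereal (real (d x + d y))"
            unfolding d_def by (rule sigma_le) (use xy LV in auto)
          with sig have "ereal (2 * (1 - \<beta> - \<alpha>) * real n) \<le> ereal (real (d x + d y))" by (rule order_trans)
          hence "2 * (1 - \<beta> - \<alpha>) * real n \<le> real (d x + d y)" by (simp only: ereal_less_eq)
          moreover have "real (d x) < (1 - \<beta> - \<alpha>) * real n" "real (d y) < (1 - \<beta> - \<alpha>) * real n"
            using xy by (auto simp: L_def H_def)
          moreover have "2 * (1 - \<beta> - \<alpha>) * real n = (1 - \<beta> - \<alpha>) * real n + (1 - \<beta> - \<alpha>) * real n"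
            by (simp add: algebra_simps)
          ultimately show False by (simp only: of_nat_add)
        qed
        have Lsmall: "real (card L) \<le> \<delta> * real n"
        proof (rule ccontr)
          assume "\<not> ?thesis"
          hence Lb: "real (card L) > \<delta> * real n" by simp
          have "r \<le> card L" using Lb nr by linarith
          from clique_lower[OF G LV Lcl this] rm
          have "(real (card L) / real r) ^ r \<le> real (num_cliques V E r)" by simp
          moreover have "(\<delta> * real n / real r) ^ r \<le> (real (card L) / real r) ^ r"
            using Lb b0 npos rm by (intro power_mono divide_right_mono) (auto simp: \<delta>_def)
          moreover have "(\<delta> * real n / real r) ^ r = (\<delta> / real r) ^ r * real n ^ r"
            by (simp add: power_mult_distrib field_simps)
          moreover have "\<epsilon> * real n ^ r < (\<delta> / real r) ^ r * real n ^ r"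
          proof (rule mult_strict_right_mono)
            have "\<epsilon> \<le> (\<delta> / real r)^r / 2" using e(2) unfolding \<epsilon>0_def by simp
            moreover have "(\<delta> / real r)^r > 0" using b0 rm by (simp add: \<delta>_def)
            ultimately show "\<epsilon> < (\<delta> / real r) ^ r" by simp
          qed (use npos in simp)
          ultimately show False using ncl by linarith
        qed
        have sumb: "real (card (cnb V E Q)) \<ge> real n - real k * ((\<beta> + \<alpha>) * real n)"
          if Q: "Q \<in> OC E H k" for Q k
        proof -
          have "(\<Sum>v\<in>set Q. (real (card V) - real (degree V E v))) \<le> real (card (set Q)) * ((\<beta> + \<alpha>) * real n)"
          proof (rule sum_bounded_above)
            fix v assume "v \<in> set Q"
            hence "v \<in> H" using Q by (auto simp: OC_def)
            thus "real (card V) - real (degree V E v) \<le> (\<beta> + \<alpha>) * real n"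
              using cV by (simp add: H_def d_def algebra_simps)
          qed
          moreover have "card (set Q) = k" using Q by (simp add: OC_def distinct_card)
          ultimately show ?thesis using cnb_card[OF G, of Q] cV by simp
        qed
        have step: "real (card (H \<inter> cnb V E Q)) \<ge> \<delta> * real n" if k: "k < m" and Q: "Q \<in> OC E H k" for k Q
        proof -
          have "cnb V E Q \<subseteq> (H \<inter> cnb V E Q) \<union> L" by (auto simp: L_def cnb_def)
          moreover have "finite ((H \<inter> cnb V E Q) \<union> L)" by (rule finite_subset[OF _ finV]) (use HV LV in blast)
          ultimately have "card (cnb V E Q) \<le> card ((H \<inter> cnb V E Q) \<union> L)"
            by (intro card_mono)
          also have "\<dots> \<le> card (H \<inter> cnb V E Q) + card L" by (rule card_Un_le)
          finally have c1: "real (card (cnb V E Q)) \<le> real (card (H \<inter> cnb V E Q)) + real (card L)" by linarith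
          have "real k \<le> real m - 1" using k by linarith
          hence t1: "real k * ((\<beta> + \<alpha>) * real n) \<le> (real m - 1) * ((\<beta> + \<alpha>) * real n)"
            using b0 a npos by (intro mult_right_mono) auto
          have t2: "(real m - 1) * ((\<beta> + \<alpha>) * real n) = (real m - 1) * \<beta> * real n + ((real m - 1) * \<alpha>) * real n"
            by (simp add: algebra_simps)
          have "(real m - 1) * \<alpha> \<le> real r * \<alpha>" using a rm by (intro mult_right_mono) auto
          hence "(real m - 1) * \<alpha> \<le> \<beta>" using ab by linarith
          hence t3: "(real m - 1) * \<alpha> * real n \<le> \<beta> * real n" using npos by (intro mult_right_mono) auto
          have t4: "(real m - 1) * \<beta> * real n + \<beta> * real n = real n - \<beta> * real n"
          proof -
            have "(real m - 1) * \<beta> + \<beta> = 1 - \<beta>" using b1 by (simp add: algebra_simps)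
            hence "((real m - 1) * \<beta> + \<beta>) * real n = (1 - \<beta>) * real n" by simp
            thus ?thesis by (simp add: algebra_simps)
          qed
          have "real k * ((\<beta> + \<alpha>) * real n) \<le> real n - \<beta> * real n" using t1 t2 t3 t4 by linarith
          then show ?thesis using sumb[OF Q] c1 Lsmall unfolding \<delta>_def by linarith
        qed
        have OCl: "real (card (OC E H m)) \<ge> (\<delta> * real n) ^ m"
          by (rule OC_lower[OF G HV _ step]) (use b0 npos in \<open>auto simp: \<delta>_def\<close>)
        have g0: "\<gamma> > 0" using s0 by (simp add: \<gamma>_def)
        have d0: "\<delta> > 0" using b0 by (simp add: \<delta>_def)
        have ex: "\<exists>Q\<in>OC E H m. real (edges_in E (cnb V E Q)) \<le> \<gamma> * real n ^ 2"
        proof (rule ccontr)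
          assume "\<not> ?thesis"
          hence big: "\<forall>Q\<in>OC E H m. real (edges_in E (cnb V E Q)) > \<gamma> * real n ^ 2" by auto
          have finOC: "finite (OC E H m)"
          proof (rule finite_subset)
            show "OC E H m \<subseteq> {xs. set xs \<subseteq> V \<and> length xs = m}" using HV by (auto simp: OC_def)
          qed (rule finite_lists_length_eq[OF finV])
          have "real (card (OC E H m)) * (\<gamma> * real n ^ 2) = (\<Sum>Q\<in>OC E H m. \<gamma> * real n ^ 2)" by simp
          also have "\<dots> \<le> (\<Sum>Q\<in>OC E H m. real (card (ES E (cnb V E Q))))"
            using big by (intro sum_mono) (auto simp: edges_in_ES less_imp_le)
          also have "\<dots> = real (card (SIGMA Q:OC E H m. ES E (cnb V E Q)))"
            using finOC ES_finite[OF G] by (simp add: card_SigmaI)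
          also have "\<dots> \<le> real (K * num_cliques V E r)"
            using count_upper[OF G HV, of m] unfolding rm K_def by linarith
          also have "\<dots> \<le> real K * (\<epsilon> * real n ^ r)"
            using ncl K0 by (simp add: mult_left_mono)
          finally have A: "real (card (OC E H m)) * (\<gamma> * real n ^ 2) \<le> real K * (\<epsilon> * real n ^ r)" .
          have B: "(\<delta> * real n) ^ m * (\<gamma> * real n ^ 2) \<le> real (card (OC E H m)) * (\<gamma> * real n ^ 2)"
            using OCl g0 by (intro mult_right_mono) auto
          have "\<epsilon> \<le> \<delta>^m * \<gamma> / (2 * real K)" using e(2) unfolding \<epsilon>0_def by simp
          hence C: "real K * \<epsilon> \<le> \<delta>^m * \<gamma> / 2" using K0 by (simp add: field_simps)
          have D: "(\<delta> * real n) ^ m * (\<gamma> * real n ^ 2) = \<delta>^m * \<gamma> * real n ^ r"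
            unfolding rm by (simp add: power_mult_distrib power_add power2_eq_square algebra_simps)
          have E: "real K * (\<epsilon> * real n ^ r) \<le> \<delta>^m * \<gamma> / 2 * real n ^ r"
            using C npos by (simp add: mult.assoc[symmetric] mult_right_mono)
          have F: "\<delta>^m * \<gamma> * real n ^ r > 0" using d0 g0 npos by simp
          have G: "\<delta>^m * \<gamma> / 2 * real n ^ r = (\<delta>^m * \<gamma> * real n ^ r) / 2" by simp
          show False using A B D E F G by linarith
        qed
        then obtain Q where Q: "Q \<in> OC E H m" and eQ: "real (edges_in E (cnb V E Q)) \<le> \<gamma> * real n ^ 2" by blast
        define N where "N = cnb V E Q"
        have NV: "N \<subseteq> V" by (auto simp: N_def cnb_def)
        have finN: "finite N" using NV finV by (rule finite_subset)
        have Nb: "real (card N) \<ge> \<beta> * real n - real m * \<alpha> * real n"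
        proof -
          have h: "real m * \<beta> = 1 - \<beta>" using b1 by (simp add: algebra_simps)
          have e1: "real m * ((\<beta> + \<alpha>) * real n) = (real m * \<beta>) * real n + real m * \<alpha> * real n"
            by (simp add: algebra_simps)
          have e2: "(real m * \<beta>) * real n = real n - \<beta> * real n" unfolding h by (simp add: algebra_simps)
          have "real m * ((\<beta> + \<alpha>) * real n) = real n - \<beta> * real n + real m * \<alpha> * real n"
            using e1 e2 by linarith
          thus ?thesis using sumb[OF Q] unfolding N_def by linarith
        qed
        define t where "t = nat \<lceil>\<beta> * real n\<rceil>"
        have bn: "\<beta> * real n \<le> real n" using ble npos by simp
        have tn: "t \<le> n" unfolding t_def using bn by (simp add: ceiling_le nat_le_iff)
        have tge: "real t \<ge> \<beta> * real n" unfolding t_def by (rule real_nat_ceiling_ge)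
        have tle: "real t \<le> \<beta> * real n + 1"
        proof -
          have "0 \<le> \<beta> * real n" using b0 npos by simp
          hence "0 \<le> \<lceil>\<beta> * real n\<rceil>" by simp
          hence "real t = of_int \<lceil>\<beta> * real n\<rceil>" unfolding t_def by simp
          thus ?thesis using of_int_ceiling_le_add_one[of "\<beta> * real n"] by linarith
        qed
        have cVN: "card (V - N) = n - card N" using cV NV finN by (simp add: card_Diff_subset)
        have "card N \<le> n" using cV NV finV card_mono by metis
        hence "t - card N \<le> card (V - N)" using cVN tn by linarith
        then obtain A where A: "A \<subseteq> V - N" "card A = t - card N" "finite A"
          by (rule obtain_subset_with_card_n)
        define S where "S = N \<union> A"
        have AV: "A \<subseteq> V" using A by auto
        have SV: "S \<subseteq> V" using NV AV by (auto simp: S_def)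
        have cS: "card S = card N + card A" unfolding S_def using A finN by (intro card_Un_disjoint) auto
        have cA: "real (card A) \<le> real m * \<alpha> * real n + 1"
        proof (cases "t \<le> card N")
          case True then show ?thesis using A a npos by simp
        next
          case False then have "real (card A) = real t - real (card N)" using A by simp
          then show ?thesis using tle Nb by linarith
        qed
        have "edges_in E S \<le> edges_in E N + card A * card V"
          unfolding S_def by (rule edges_extend[OF G AV])
        hence "real (edges_in E S) \<le> real (edges_in E N) + real (card A) * real n"
          using cV by (metis of_nat_add of_nat_le_iff of_nat_mult)
        also have "\<dots> \<le> \<gamma> * real n ^ 2 + (real m * \<alpha> * real n + 1) * real n"
          using eQ cA npos unfolding N_def by (intro add_mono mult_right_mono) auto
        also have "\<dots> \<le> s * real n ^ 2"
        proof -
          have "real m * s \<le> 1 / 4" using s1 s0 by (simp add: algebra_simps)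
          hence "real m * s * s \<le> s / 4" using s0 by (metis mult_right_mono less_imp_le mult.commute times_divide_eq_right mult_1)
          moreover have "real m * \<alpha> = real m * s * s" using ss by (simp add: mult.assoc)
          ultimately have "real m * \<alpha> \<le> s / 4" by linarith
          hence "real m * \<alpha> * (real n * real n) \<le> s / 4 * (real n * real n)"
            by (rule mult_right_mono) simp
          hence m1: "real m * \<alpha> * real n * real n \<le> s / 4 * real n ^ 2"
            by (simp add: power2_eq_square mult.assoc)
          have "1 \<le> s / 4 * real n" using ns npos by (simp add: field_simps)
          hence m2: "real n \<le> s / 4 * real n ^ 2" using npos
            by (metis mult_right_mono less_imp_le mult_1 power2_eq_square mult.assoc)
          have "(real m * \<alpha> * real n + 1) * real n = real m * \<alpha> * real n * real n + real n"
            by (simp add: algebra_simps)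
          then show ?thesis using m1 m2 unfolding \<gamma>_def by linarith
        qed
        finally have edg: "real (edges_in E S) \<le> sqrt \<alpha> * (real (card V))^2" using cV by (simp add: s_def)
        have "real (card S) \<ge> real t" using cS A by simp
        hence "real (card S) \<ge> real n / (real r - 1)" using tge unfolding \<beta>_def by simp
        then show "\<exists>S. gamma_independent V E (sqrt \<alpha>) S \<and> real (card S) \<ge> real n / (real r - 1)"
          using edg SV unfolding gamma_independent_def by blast
      qed
    qed
  qed
qed

end
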